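(* Let $m,n\ge0$ be integers, let $\mathbb{K}$ be a field of characteristic zero, and regard $m-n$ as an element of $\mathbb{K}$. Let $\lambda,\mu$ be bipartitions. (i) If $\lambda$ is almost $(m|n)$-cross, then $D_{\lambda,\mu}(m-n)=0$ whenever $\mu\ne\lambda$. (ii) If $\mu$ is almost $(m|n)$-cross, then $D_{\lambda,\mu}(m-n)=0$ unless $\lambda=\mu$ or $|\lambda|>|\mu|+2$.
   Context: A partition is a weakly decreasing sequence $\alpha=(\alpha_1,\alpha_2,\dots)$ of nonnegative integers, almost all zero, with size $|\alpha|=\sum_i\alpha_i$. A bipartition is a pair $\lambda=(\lambda^\bullet,\lambda^\circ)$ of partitions, with size $|\lambda|=|\lambda^\bullet|+|\lambda^\circ|$. A bipartition $\lambda$ is $(m|n)$-cross if there exists $0\le k\le m$ with $\lambda^\bullet_{k+1}+\lambda^\circ_{m-k+1}\le n$. It is almost $(m|n)$-cross if it is not $(m|n)$-cross but every bipartition strictly contained in it (componentwise containment) is $(m|n)$-cross. Set $I_\wedge(\lambda)=\{\lambda^\bullet_i-(i-1):i\ge1\}$ and $I_\vee(\lambda,\delta)=\{i-\delta-\lambda^\circ_i:i\ge1\}$. The weight diagram $x_\lambda(\delta)$ labels each integer $j$ by: - $\bigcirc$ if $j$ is in neither set; - $\wedge$ if $j$ is only in $I_\wedge(\lambda)$; - $\vee$ if $j$ is only in $I_\vee(\lambda,\delta)$; - $\times$ if $j$ is in both. The cap diagram $c_\lambda(\delta)$ is built iteratively: at each step, draw a cap connecting $i<j$ whenever $i$ is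 labelled $\vee$, $j$ is labelled $\wedge$, and every integer strictly between them is labelled $\bigcirc$ or $\times$ or lies on an earlier cap. Vertices joined by a cap are connected. $x_\mu(\delta)$ is linked to $x_\lambda(\delta)$ if it is obtained by interchanging labels on finitely many pairs of connected vertices of $x_\lambda(\delta)$. $D_{\lambda,\mu}(\delta)=1$ if $x_\mu(\delta)$ is linked to $x_\lambda(\delta)$, and $0$ otherwise. *)

theory Defs
  imports Main
begin

text \<open>Partitions are represented 0-indexed: a function \<open>a :: nat \<Rightarrow> nat\<close>
  with \<open>a i\<close> standing for the paper's part \<open>\<alpha>_(i+1)\<close>.\<close>

definition is_partition :: "(nat \<Rightarrow> nat) \<Rightarrow> bool" where
  "is_partition a \<longleftrightarrow> (\<forall>i. a (Suc i) \<le> a i) \<and> finite {i. a i \<noteq> 0}"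

definition psize :: "(nat \<Rightarrow> nat) \<Rightarrow> nat" where
  "psize a = (\<Sum>i\<in>{i. a i \<noteq> 0}. a i)"

type_synonym bipartition = "(nat \<Rightarrow> nat) \<times> (nat \<Rightarrow> nat)"

definition is_bipartition :: "bipartition \<Rightarrow> bool" where
  "is_bipartition l \<longleftrightarrow> is_partition (fst l) \<and> is_partition (snd l)"

definition bsize :: "bipartition \<Rightarrow> nat" where
  "bsize l = psize (fst l) + psize (snd l)"

definition bcontained :: "bipartition \<Rightarrow> bipartition \<Rightarrow> bool" where
  "bcontained l l' \<longleftrightarrow> (\<forall>i. fst l i \<le> fst l' i) \<and> (\<forall>i. snd l i \<le> snd l' i)"

text \<open>\<open>\<lambda>\<^sup>\<bullet>_(k+1) + \<lambda>\<^sup>\<circ>_(m-k+1) \<le> n\<close>, in 0-indexed form.\<close>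
definition is_cross :: "nat \<Rightarrow> nat \<Rightarrow> bipartition \<Rightarrow> bool" where
  "is_cross m n l \<longleftrightarrow> (\<exists>k\<le>m. fst l k + snd l (m - k) \<le> n)"

definition almost_cross :: "nat \<Rightarrow> nat \<Rightarrow> bipartition \<Rightarrow> bool" where
  "almost_cross m n l \<longleftrightarrow> is_bipartition l \<and> \<not> is_cross m n l \<and>
     (\<forall>l'. is_bipartition l' \<and> bcontained l' l \<and> l' \<noteq> l \<longrightarrow> is_cross m n l')"

datatype label = Circ | Up | Down | Cr

definition I_up :: "bipartition \<Rightarrow> int set" where
  "I_up l = {int (fst l i) - int i | i. True}"

text \<open>\<open>I_\<or>(\<lambda>,\<delta>) = {i - \<delta> - \<lambda>\<^sup>\<circ>_i : i \<ge> 1}\<close>, as a subset of the field; an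
  integer j belongs to it when its image in the field does.\<close>
definition I_down :: "bipartition \<Rightarrow> 'a::field \<Rightarrow> 'a set" where
  "I_down l \<delta> = {of_nat (Suc i) - \<delta> - of_nat (snd l i) | i. True}"

definition weight :: "bipartition \<Rightarrow> 'a::field \<Rightarrow> int \<Rightarrow> label" where
  "weight l \<delta> j =
     (let a = (j \<in> I_up l); b = (of_int j \<in> I_down l \<delta>) in
      if a \<and> b then Cr else if a then Up else if b then Down else Circ)"

definition cap_verts :: "(int \<times> int) set \<Rightarrow> int set" where
  "cap_verts C = fst ` C \<union> snd ` C"

definition cap_step :: "(int \<Rightarrow> label) \<Rightarrow> (int \<times> int) set \<Rightarrow> (int \<times> int) set" where
  "cap_step L C = C \<union> {(i, j). i < j \<and> L i = Down \<and> L j = Up \<and>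
      i \<notin> cap_verts C \<and> j \<notin> cap_verts C \<and>
      (\<forall>k. i < k \<and> k < j \<longrightarrow> L k = Circ \<or> L k = Cr \<or> k \<in> cap_verts C)}"

definition caps :: "(int \<Rightarrow> label) \<Rightarrow> (int \<times> int) set" where
  "caps L = (\<Union>s. (cap_step L ^^ s) {})"

definition linked :: "(int \<Rightarrow> label) \<Rightarrow> (int \<Rightarrow> label) \<Rightarrow> bool" where
  "linked L' L \<longleftrightarrow> (\<exists>S. S \<subseteq> caps L \<and> finite S \<and>
      (\<forall>(i, j)\<in>S. L' i = L j \<and> L' j = L i) \<and>
      (\<forall>k. k \<notin> cap_verts S \<longrightarrow> L' k = L k))"

definition Dcoef :: "bipartition \<Rightarrow> bipartition \<Rightarrow> 'a::field \<Rightarrow> nat" where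
  "Dcoef l u \<delta> = (if linked (weight u \<delta>) (weight l \<delta>) then 1 else 0)"

end

theory Submission
  imports Defs
begin

lemma part_antimono:
  assumes "is_partition a" "i \<le> j" shows "a j \<le> a i"
  using assms unfolding is_partition_def
  by (metis lift_Suc_antimono_le)

lemma strict_dec:
  fixes f :: "nat \<Rightarrow> int"
  assumes "\<forall>i. f (Suc i) < f i" "i < j" shows "f j < f i"
  using assms(2)
proof (induction j)
  case 0 then show ?case by simp
next
  case (Suc j)
  then show ?case using assms(1) by (metis less_Suc_eq order.strict_trans)
qed

lemma strict_dec_le:
  fixes f :: "nat \<Rightarrow> int"
  assumes "\<forall>i. f (Suc i) < f i" "i \<le> j" shows "f j \<le> f i"
  using strict_dec[OF assms(1)] assms(2) by (metis le_less order_refl)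

lemma strict_inj:
  fixes f :: "nat \<Rightarrow> int" assumes "\<forall>i. f (Suc i) < f i" shows "inj f"
proof (rule injI)
  fix a b assume "f a = f b"
  then show "a = b" using strict_dec[OF assms, of a b] strict_dec[OF assms, of b a]
    by (metis linorder_neqE_nat less_irrefl)
qed

lemma sd_aux:
  fixes f g :: "nat \<Rightarrow> int"
  assumes sf: "\<forall>i. f (Suc i) < f i" and sg: "\<forall>i. g (Suc i) < g i"
    and eq: "\<forall>j<i. f j = g j" and lt: "f i < g i" and mem: "g i \<in> range f"
  shows False
proof -
  obtain p where p: "g i = f p" using mem by auto
  show False
  proof (cases "p < i")
    case True
    then have "f p = g p" using eq by auto
    moreover have "g i < g p" using strict_dec[OF sg True] .
    ultimately show False using p by simp
  next
    case False
    then have "f p \<le> f i" using strict_dec_le[OF sf] by simp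
    then show False using p lt by simp
  qed
qed

lemma sd_range_eq:
  fixes f g :: "nat \<Rightarrow> int"
  assumes sf: "\<forall>i. f (Suc i) < f i" and sg: "\<forall>i. g (Suc i) < g i"
    and r: "range f = range g"
  shows "f = g"
proof -
  have "f i = g i" for i
  proof (induction i rule: less_induct)
    case (less i)
    then have eq: "\<forall>j<i. f j = g j" by auto
    show ?case
    proof (rule ccontr)
      assume "f i \<noteq> g i"
      then consider "f i < g i" | "g i < f i" by linarith
      then show False
      proof cases
        case 1
        have "g i \<in> range f" using r by (metis rangeI)
        then show False using sd_aux[OF sf sg eq 1] by simp
      next
        case 2
        have eq2: "\<forall>j<i. g j = f j" using eq by simp
        have "f i \<in> range g" using r by (metis rangeI)
        then show False using sd_aux[OF sg sf eq2 2] by simp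
      qed
    qed
  qed
  then show ?thesis by auto
qed

lemma count_ge:
  fixes f :: "nat \<Rightarrow> int"
  assumes sf: "\<forall>i. f (Suc i) < f i" and fin: "finite A" and sub: "A \<subseteq> range f"
    and ge: "\<forall>a\<in>A. v \<le> a" and c: "Suc k \<le> card A"
  shows "v \<le> f k"
proof (rule ccontr)
  assume "\<not> v \<le> f k"
  then have lt: "f k < v" by simp
  have "A \<subseteq> f ` {..<k}"
  proof
    fix a assume a: "a \<in> A"
    then obtain r where r: "a = f r" using sub by auto
    have "r < k"
    proof (rule ccontr)
      assume "\<not> r < k"
      then have "f r \<le> f k" using strict_dec_le[OF sf] by simp
      then show False using lt ge a r by force
    qed
    then show "a \<in> f ` {..<k}" using r by auto
  qed
  then have "card A \<le> card (f ` {..<k})" by (simp add: card_mono)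
  also have "\<dots> \<le> k" using card_image_le[of "{..<k}" f] by simp
  finally show False using c by simp
qed

lemma grow:
  fixes p q :: "nat \<Rightarrow> nat" and x :: int
  assumes pp: "is_partition p" and pq: "is_partition q"
    and qz: "\<forall>r>m. q r = 0"
    and xm: "x \<in> range (\<lambda>r. int (p r) - int r)" and xg: "int (q 0) < x"
    and cr: "\<forall>r\<le>m. int (q r) - int r \<in> range (\<lambda>r. int (p r) - int r)"
  shows "(\<forall>r. q r \<le> p r) \<and> q 0 < p 0 \<and> q (Suc m) < p (Suc m)"
proof -
  define f where "f = (\<lambda>r. int (p r) - int r)"
  define g where "g = (\<lambda>r. int (q r) - int r)"
  have sf: "\<forall>i. f (Suc i) < f i"
  proof
    fix i have "p (Suc i) \<le> p i" using pp unfolding is_partition_def by auto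
    then show "f (Suc i) < f i" unfolding f_def by simp
  qed
  have sg: "\<forall>i. g (Suc i) < g i"
  proof
    fix i have "q (Suc i) \<le> q i" using pq unfolding is_partition_def by auto
    then show "g (Suc i) < g i" unfolding g_def by simp
  qed
  have key: "g k \<le> f (Suc k)" if k: "k \<le> m" for k
  proof -
    define A where "A = insert x (g ` {..k})"
    have c1: "card (g ` {..k}) = Suc k"
      using strict_inj[OF sg] by (simp add: card_image inj_on_subset)
    have xn: "x \<notin> g ` {..k}"
    proof
      assume "x \<in> g ` {..k}"
      then obtain r where "x = g r" by auto
      then show False using strict_dec_le[OF sg, of 0 r] xg unfolding g_def by simp
    qed
    have cA: "card A = Suc (Suc k)" unfolding A_def using c1 xn by simp
    have sub: "A \<subseteq> range f" unfolding A_def using xm cr k unfolding f_def g_def by auto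
    have ge: "\<forall>a\<in>A. g k \<le> a"
      unfolding A_def using strict_dec_le[OF sg, of 0 k] strict_dec_le[OF sg] xg
      unfolding g_def by fastforce
    show ?thesis using count_ge[OF sf _ sub ge] cA unfolding A_def by simp
  qed
  obtain r0 where r0: "x = f r0" using xm unfolding f_def by auto
  have p0: "q 0 < p 0" using strict_dec_le[OF sf, of 0 r0] r0 xg unfolding f_def by simp
  have suc: "q k + 1 \<le> p (Suc k)" if "k \<le> m" for k
    using key[OF that] unfolding f_def g_def by simp
  have allr: "q r \<le> p r" for r
  proof (cases r)
    case 0 then show ?thesis using p0 by simp
  next
    case (Suc k)
    show ?thesis
    proof (cases "k \<le> m")
      case True
      have "q (Suc k) \<le> q k" using pq unfolding is_partition_def by auto
      then show ?thesis using suc[OF True] Suc by simp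
    next
      case False then show ?thesis using qz Suc by simp
    qed
  qed
  have "q (Suc m) < p (Suc m)" using suc[of m] qz by simp
  then show ?thesis using allr p0 by simp
qed

lemma psize_grow:
  assumes pp: "is_partition p" and le: "\<forall>r. q r \<le> p r" and l0: "q 0 < p 0"
    and l1: "q (Suc m) < p (Suc m)"
  shows "psize q + 2 \<le> psize p"
proof -
  define S where "S = {i. p i \<noteq> 0}"
  have fin: "finite S" using pp unfolding is_partition_def S_def by auto
  have sub: "{i. q i \<noteq> 0} \<subseteq> S" 
  proof
    fix i assume "i \<in> {i. q i \<noteq> 0}"
    then have "q i \<noteq> 0" by simp
    moreover have "q i \<le> p i" using le by simp
    ultimately show "i \<in> S" unfolding S_def by simp
  qed
  have e1: "psize q = sum q S" unfolding psize_def
    by (rule sum.mono_neutral_left[OF fin sub]) auto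
  have e2: "sum p S = sum q S + sum (\<lambda>i. p i - q i) S"
  proof -
    have "sum p S = sum (\<lambda>i. q i + (p i - q i)) S" using le by (intro sum.cong) auto
    then show ?thesis by (simp add: sum.distrib)
  qed
  have e3: "sum (\<lambda>i. p i - q i) {0, Suc m} \<le> sum (\<lambda>i. p i - q i) S"
    by (rule sum_mono2[OF fin]) (use l0 l1 in \<open>auto simp: S_def\<close>)
  have e4: "2 \<le> sum (\<lambda>i. p i - q i) {0, Suc m}" using l0 l1 by simp
  have "psize p = sum p S" unfolding psize_def S_def ..
  then show ?thesis using e1 e2 e3 e4 by linarith
qed

lemma removable:
  assumes pa: "is_partition a" and pos: "0 < a k"
  obtains r where "k \<le> r" "a r = a k" "is_partition (a(r := a r - 1))"
proof -
  define T where "T = {r. k \<le> r \<and> a r = a k}"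
  have finT: "finite T"
    by (rule finite_subset[of _ "{i. a i \<noteq> 0}"]) (use pa pos in \<open>auto simp: T_def is_partition_def\<close>)
  have kT: "k \<in> T" unfolding T_def by simp
  define r where "r = Max T"
  have rT: "r \<in> T" unfolding r_def using Max_in[OF finT] kT by blast
  have "Suc r \<notin> T"
  proof
    assume "Suc r \<in> T"
    then have "Suc r \<le> r" using Max_ge[OF finT, of "Suc r"] unfolding r_def by simp
    then show False by simp
  qed
  then have lt: "a (Suc r) < a r" using rT pa unfolding T_def is_partition_def
    by (metis (mono_tags, lifting) le_SucI le_neq_implies_less mem_Collect_eq)
  have "is_partition (a(r := a r - 1))"
    unfolding is_partition_def
  proof (intro conjI allI)
    fix i show "(a(r := a r - 1)) (Suc i) \<le> (a(r := a r - 1)) i"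
    proof -
      have h: "a (Suc i) \<le> a i" for i using pa unfolding is_partition_def by auto
      consider "i = r" | "Suc i = r" | "i \<noteq> r" "Suc i \<noteq> r" by blast
      then show ?thesis
      proof cases
        case 1 then show ?thesis using lt by simp
      next
        case 2 then show ?thesis using h[of i] by simp
      next
        case 3 then show ?thesis using h[of i] by simp
      qed
    qed
  next
    show "finite {i. (a(r := a r - 1)) i \<noteq> 0}"
      by (rule finite_subset[of _ "{i. a i \<noteq> 0}"]) (use pa in \<open>auto simp: is_partition_def split: if_splits\<close>)
  qed
  then show ?thesis using that rT unfolding T_def by auto
qed

lemma ac_struct:
  assumes ac: "almost_cross m n u"
  shows "(\<forall>r>m. fst u r = 0) \<and> (\<forall>r>m. snd u r = 0) \<and> (\<forall>k\<le>m. fst u k + snd u (m - k) = n + 1)"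
proof -
  obtain b c where u: "u = (b, c)" by (cases u)
  have pb: "is_partition b" and pc: "is_partition c"
    using ac u unfolding almost_cross_def is_bipartition_def by auto
  have nc: "\<forall>k\<le>m. n < b k + c (m - k)"
    using ac u unfolding almost_cross_def is_cross_def by auto
  have mn: "\<And>l'. is_bipartition l' \<Longrightarrow> bcontained l' u \<Longrightarrow> l' \<noteq> u \<Longrightarrow> is_cross m n l'"
    using ac unfolding almost_cross_def by auto
  have rb: False if p: "is_partition (b(r := b r - 1))" "0 < b r"
       "\<forall>k\<le>m. n < (b(r := b r - 1)) k + c (m - k)" for r
  proof -
    have "is_cross m n (b(r := b r - 1), c)"
      apply (rule mn) using p pc u unfolding is_bipartition_def bcontained_def
      by (auto simp: fun_eq_iff)
    then show False using p(3) unfolding is_cross_def by (auto simp del: fun_upd_apply)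
  qed
  have rc: False if p: "is_partition (c(r := c r - 1))" "0 < c r"
       "\<forall>k\<le>m. n < b k + (c(r := c r - 1)) (m - k)" for r
  proof -
    have "is_cross m n (b, c(r := c r - 1))"
      apply (rule mn) using p pb u unfolding is_bipartition_def bcontained_def
      by (auto simp: fun_eq_iff)
    then show False using p(3) unfolding is_cross_def by (auto simp del: fun_upd_apply)
  qed
  have A: "\<forall>r>m. b r = 0"
  proof (intro allI impI, rule ccontr)
    fix r assume r: "m < r" "b r \<noteq> 0"
    obtain r' where r': "r \<le> r'" "b r' = b r" "is_partition (b(r' := b r' - 1))"
      using removable[OF pb, of r] r by auto
    show False
      by (rule rb[OF r'(3)]) (use r r' nc in auto)
  qed
  have B: "\<forall>r>m. c r = 0"
  proof (intro allI impI, rule ccontr)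
    fix r assume r: "m < r" "c r \<noteq> 0"
    obtain r' where r': "r \<le> r'" "c r' = c r" "is_partition (c(r' := c r' - 1))"
      using removable[OF pc, of r] r by auto
    show False
    proof (rule rc[OF r'(3)])
      show "0 < c r'" using r r' by simp
      show "\<forall>k\<le>m. n < b k + (c(r' := c r' - 1)) (m - k)"
        using r r' nc by auto
    qed
  qed
  have C: "b k + c (m - k) = n + 1" if k: "k \<le> m" for k
  proof (rule ccontr)
    assume "b k + c (m - k) \<noteq> n + 1"
    then have big: "n + 2 \<le> b k + c (m - k)" using nc k by fastforce
    show False
    proof (cases "0 < c (m - k)")
      case True
      obtain r where r: "m - k \<le> r" "c r = c (m - k)" "is_partition (c(r := c r - 1))"
        using removable[OF pc True] by auto
      have rm: "r \<le> m" using B r True by (metis le_less_linear less_irrefl)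
      show False
      proof (rule rc[OF r(3)])
        show "0 < c r" using r True by simp
        show "\<forall>k'\<le>m. n < b k' + (c(r := c r - 1)) (m - k')"
        proof (intro allI impI)
          fix k' assume k': "k' \<le> m"
          show "n < b k' + (c(r := c r - 1)) (m - k')"
          proof (cases "m - k' = r")
            case True
            then have "k' \<le> k" using r k k' by linarith
            then have "b k \<le> b k'" using part_antimono[OF pb] by simp
            then show ?thesis using True big r by simp
          next
            case False then show ?thesis using nc k' by simp
          qed
        qed
      qed
    next
      case False
      then have bk: "0 < b k" using big by simp
      obtain r where r: "k \<le> r" "b r = b k" "is_partition (b(r := b r - 1))"
        using removable[OF pb bk] by auto
      have rm: "r \<le> m" using A r bk by (metis le_less_linear less_irrefl)
      show False
      proof (rule rb[OF r(3)])
        show "0 < b r" using r bk by simp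
        show "\<forall>k'\<le>m. n < (b(r := b r - 1)) k' + c (m - k')"
        proof (intro allI impI)
          fix k' assume k': "k' \<le> m"
          show "n < (b(r := b r - 1)) k' + c (m - k')"
          proof (cases "k' = r")
            case True
            have "m - r \<le> m - k" using r by simp
            then have "c (m - k) \<le> c (m - r)" using part_antimono[OF pc] by simp
            then show ?thesis using True big r by simp
          next
            case False then show ?thesis using nc k' by simp
          qed
        qed
      qed
    qed
  qed
  show ?thesis using A B C u by simp
qed

lemma Iup_iff: "j \<in> I_up l \<longleftrightarrow> (\<exists>r. j = int (fst l r) - int r)"
  unfolding I_up_def by auto

lemma Iup_range: "I_up l = range (\<lambda>r. int (fst l r) - int r)"
  unfolding I_up_def by auto

lemma Idown_iff:
  "((of_int j :: 'a::field_char_0) \<in> I_down l (of_int d)) \<longleftrightarrow> (\<exists>r. j = int r + 1 - d - int (snd l r))"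
proof -
  have "((of_int j :: 'a) = of_nat (Suc r) - of_int d - of_nat (snd l r)) \<longleftrightarrow> j = int r + 1 - d - int (snd l r)" for r
  proof -
    have "(of_nat (Suc r) - of_int d - of_nat (snd l r) :: 'a) = of_int (int r + 1 - d - int (snd l r))" by simp
    then show ?thesis by (simp only: of_int_eq_iff)
  qed
  then show ?thesis unfolding I_down_def by auto
qed

lemma w_up: "weight l \<delta> j = Up \<longleftrightarrow> j \<in> I_up l \<and> of_int j \<notin> I_down l \<delta>"
  unfolding weight_def Let_def by auto
lemma w_down: "weight l \<delta> j = Down \<longleftrightarrow> j \<notin> I_up l \<and> of_int j \<in> I_down l \<delta>"
  unfolding weight_def Let_def by auto
lemma w_cr: "weight l \<delta> j = Cr \<longleftrightarrow> j \<in> I_up l \<and> of_int j \<in> I_down l \<delta>"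
  unfolding weight_def Let_def by auto
lemma w_upcr: "weight l \<delta> j \<in> {Up, Cr} \<longleftrightarrow> j \<in> I_up l"
  unfolding weight_def Let_def by auto
lemma w_downcr: "weight l \<delta> j \<in> {Down, Cr} \<longleftrightarrow> of_int j \<in> I_down l \<delta>"
  unfolding weight_def Let_def by auto

definition acstr :: "nat \<Rightarrow> nat \<Rightarrow> bipartition \<Rightarrow> bool" where
  "acstr m n u \<longleftrightarrow> (\<forall>r>m. fst u r = 0) \<and> (\<forall>r>m. snd u r = 0) \<and> (\<forall>k\<le>m. fst u k + snd u (m - k) = n + 1)"

lemma W3:
  assumes st: "acstr m n u" and r: "r \<le> m"
  shows "weight u (of_int (int m - int n) :: 'a::field_char_0) (int (fst u r) - int r) = Cr"
proof -
  have e: "fst u r + snd u (m - r) = n + 1" using st r unfolding acstr_def by auto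
  have "int (fst u r) - int r = int (m - r) + 1 - (int m - int n) - int (snd u (m - r))"
    using e r by simp
  then have "(of_int (int (fst u r) - int r) :: 'a) \<in> I_down u (of_int (int m - int n))"
    unfolding Idown_iff by blast
  then show ?thesis unfolding w_cr Iup_iff by blast
qed

lemma W1:
  assumes st: "acstr m n u" and w: "weight u (of_int (int m - int n) :: 'a::field_char_0) j = Up"
  shows "j < - int m"
proof -
  obtain r where r: "j = int (fst u r) - int r" using w unfolding w_up Iup_iff by blast
  show ?thesis
  proof (cases "r \<le> m")
    case True
    then show ?thesis using W3[OF st True, where 'a='a] w r by simp
  next
    case False
    then show ?thesis using st r unfolding acstr_def by simp
  qed
qed

lemma W2:
  assumes st: "acstr m n u" and w: "weight u (of_int (int m - int n) :: 'a::field_char_0) j = Down"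
  shows "int n + 2 \<le> j"
proof -
  obtain r where r: "j = int r + 1 - (int m - int n) - int (snd u r)"
    using w unfolding w_down Idown_iff by blast
  show ?thesis
  proof (cases "r \<le> m")
    case True
    have "m - r \<le> m" by simp
    then have e: "fst u (m - r) + snd u (m - (m - r)) = n + 1" using st unfolding acstr_def by blast
    have "m - (m - r) = r" using True by simp
    then have e': "fst u (m - r) + snd u r = n + 1" using e by simp
    have i1: "int (fst u (m - r)) + int (snd u r) = int n + 1" using arg_cong[OF e', of int] by simp
    have i2: "int (m - r) = int m - int r" using True by simp
    have "j = int (fst u (m - r)) - int (m - r)" using i1 i2 r by linarith
    then have "j \<in> I_up u" unfolding Iup_iff by blast
    then show ?thesis using w unfolding w_down by simp
  next
    case False
    then show ?thesis using st r unfolding acstr_def by simp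
  qed
qed

lemma caps_labels:
  assumes "(i, j) \<in> caps L" shows "L i = Down \<and> L j = Up"
proof -
  have "\<forall>p\<in>(cap_step L ^^ s) {}. L (fst p) = Down \<and> L (snd p) = Up" for s
    by (induction s) (auto simp: cap_step_def)
  then show ?thesis using assms unfolding caps_def by fastforce
qed

lemma caps_empty:
  assumes "\<forall>i j. L i = Down \<longrightarrow> L j = Up \<longrightarrow> j < i" shows "caps L = {}"
proof -
  have ce: "cap_step L {} = {}"
  proof -
    have "\<not> (i < j \<and> L i = Down \<and> L j = Up)" for i j using assms by (meson less_asym)
    then show ?thesis unfolding cap_step_def by auto
  qed
  have "(cap_step L ^^ s) {} = {}" for s
    by (induction s) (simp_all add: ce)
  then show ?thesis unfolding caps_def by simp
qed

lemma weight_inj: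
  assumes bu: "is_bipartition u" and bl: "is_bipartition l"
    and eq: "\<forall>k. weight u (of_int d :: 'a::field_char_0) k = weight l (of_int d :: 'a) k"
  shows "u = l"
proof -
  have pu1: "is_partition (fst u)" and pu2: "is_partition (snd u)"
    and pl1: "is_partition (fst l)" and pl2: "is_partition (snd l)"
    using bu bl unfolding is_bipartition_def by auto
  have strict: "\<forall>i. (\<lambda>r. int (p r) - int r) (Suc i) < (\<lambda>r. int (p r) - int r) i"
    if "is_partition p" for p
  proof
    fix i have "p (Suc i) \<le> p i" using that unfolding is_partition_def by auto
    then show "(\<lambda>r. int (p r) - int r) (Suc i) < (\<lambda>r. int (p r) - int r) i" by simp
  qed
  have "I_up u = I_up l"
  proof
    show "I_up u \<subseteq> I_up l" using eq w_upcr by (metis subsetI)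
    show "I_up l \<subseteq> I_up u" using eq w_upcr by (metis subsetI)
  qed
  then have "range (\<lambda>r. int (fst u r) - int r) = range (\<lambda>r. int (fst l r) - int r)"
    unfolding Iup_range .
  then have "(\<lambda>r. int (fst u r) - int r) = (\<lambda>r. int (fst l r) - int r)"
    using sd_range_eq[OF strict[OF pu1] strict[OF pl1]] by blast
  then have f: "fst u = fst l"
  proof -
    assume h: "(\<lambda>r. int (fst u r) - int r) = (\<lambda>r. int (fst l r) - int r)"
    show ?thesis
    proof (rule ext)
      fix r show "fst u r = fst l r" using fun_cong[OF h, of r] by simp
    qed
  qed
  have dd: "(\<exists>r. j = int r + 1 - d - int (snd u r)) \<longleftrightarrow> (\<exists>r. j = int r + 1 - d - int (snd l r))" for j
  proof -
    have "(of_int j :: 'a) \<in> I_down u (of_int d) \<longleftrightarrow> (of_int j :: 'a) \<in> I_down l (of_int d)"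
      using eq w_downcr by metis
    then show ?thesis unfolding Idown_iff .
  qed
  have "range (\<lambda>r. int (snd u r) - int r) = range (\<lambda>r. int (snd l r) - int r)"
  proof -
    have "x \<in> range (\<lambda>r. int (snd u r) - int r) \<longleftrightarrow> x \<in> range (\<lambda>r. int (snd l r) - int r)" for x
    proof -
      have a: "x \<in> range (\<lambda>r. int (snd w r) - int r) \<longleftrightarrow> (\<exists>r. 1 - d - x = int r + 1 - d - int (snd w r))" for w
      proof -
        have "(1 - d - x = int r + 1 - d - int (snd w r)) \<longleftrightarrow> (x = int (snd w r) - int r)" for r by arith
        then show ?thesis by (simp add: image_iff)
      qed
      show ?thesis unfolding a dd ..
    qed
    then show ?thesis by blast
  qed
  then have "(\<lambda>r. int (snd u r) - int r) = (\<lambda>r. int (snd l r) - int r)"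
    using sd_range_eq[OF strict[OF pu2] strict[OF pl2]] by blast
  then have s: "snd u = snd l"
  proof -
    assume h: "(\<lambda>r. int (snd u r) - int r) = (\<lambda>r. int (snd l r) - int r)"
    show ?thesis
    proof (rule ext)
      fix r show "snd u r = snd l r" using fun_cong[OF h, of r] by simp
    qed
  qed
  show ?thesis using f s by (simp add: prod_eq_iff)
qed

theorem corollary2p8:
  fixes m n :: nat and l u :: bipartition
  assumes "is_bipartition l" and "is_bipartition u"
  shows "(almost_cross m n l \<longrightarrow> u \<noteq> l \<longrightarrow>
            Dcoef l u (of_int (int m - int n) :: 'a::field_char_0) = 0)
       \<and> (almost_cross m n u \<longrightarrow> \<not> (l = u \<or> bsize l > bsize u + 2) \<longrightarrow>
            Dcoef l u (of_int (int m - int n) :: 'a) = 0)"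
proof (intro conjI impI)
  assume ac: "almost_cross m n l" and ne: "u \<noteq> l"
  have st: "acstr m n l" using ac_struct[OF ac] unfolding acstr_def .
  have ce: "caps (weight l (of_int (int m - int n) :: 'a)) = {}"
  proof (rule caps_empty, intro allI impI)
    fix i j
    assume "weight l (of_int (int m - int n) :: 'a) i = Down"
      and "weight l (of_int (int m - int n) :: 'a) j = Up"
    then show "j < i" using W1[OF st] W2[OF st] by fastforce
  qed
  have "\<not> linked (weight u (of_int (int m - int n) :: 'a)) (weight l (of_int (int m - int n) :: 'a))"
  proof
    assume "linked (weight u (of_int (int m - int n) :: 'a)) (weight l (of_int (int m - int n) :: 'a))"
    then obtain S where S: "S \<subseteq> caps (weight l (of_int (int m - int n) :: 'a))"
      "\<forall>k. k \<notin> cap_verts S \<longrightarrow> weight u (of_int (int m - int n) :: 'a) k = weight l (of_int (int m - int n) :: 'a) k"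
      unfolding linked_def by blast
    then have "S = {}" using ce by blast
    then have "\<forall>k. weight u (of_int (int m - int n) :: 'a) k = weight l (of_int (int m - int n) :: 'a) k"
      using S(2) unfolding cap_verts_def by simp
    then have "u = l" using weight_inj[OF assms(2) assms(1)] by blast
    then show False using ne by simp
  qed
  then show "Dcoef l u (of_int (int m - int n) :: 'a) = 0" unfolding Dcoef_def by simp
next
  assume ac: "almost_cross m n u" and nb: "\<not> (l = u \<or> bsize l > bsize u + 2)"
  have st: "acstr m n u" using ac_struct[OF ac] unfolding acstr_def .
  have st': "(\<forall>r>m. fst u r = 0) \<and> (\<forall>r>m. snd u r = 0) \<and> (\<forall>k\<le>m. fst u k + snd u (m - k) = n + 1)"
    using ac_struct[OF ac] .
  define \<delta> where "\<delta> = (of_int (int m - int n) :: 'a)"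
  have pl1: "is_partition (fst l)" and pl2: "is_partition (snd l)"
    and pu1: "is_partition (fst u)" and pu2: "is_partition (snd u)"
    using assms unfolding is_bipartition_def by auto
  have "\<not> linked (weight u \<delta>) (weight l \<delta>)"
  proof
    assume "linked (weight u \<delta>) (weight l \<delta>)"
    then obtain S where S: "S \<subseteq> caps (weight l \<delta>)"
      "\<forall>(i, j)\<in>S. weight u \<delta> i = weight l \<delta> j \<and> weight u \<delta> j = weight l \<delta> i"
      "\<forall>k. k \<notin> cap_verts S \<longrightarrow> weight u \<delta> k = weight l \<delta> k"
      unfolding linked_def by blast
    show False
    proof (cases "S = {}")
      case True
      then have "\<forall>k. weight u \<delta> k = weight l \<delta> k"
        using S(3) unfolding cap_verts_def by simp
      then have "u = l" using weight_inj[OF assms(2) assms(1)] unfolding \<delta>_def by blast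
      then show False using nb by simp
    next
      case False
      then obtain i j where ij: "(i, j) \<in> S" by auto
      have capl: "weight l \<delta> a = Down \<and> weight l \<delta> b = Up" if "(a, b) \<in> S" for a b
        using caps_labels S(1) that by blast
      have wli: "weight l \<delta> i = Down" and wlj: "weight l \<delta> j = Up" using capl[OF ij] by auto
      have wui: "weight u \<delta> i = Up" and wuj: "weight u \<delta> j = Down"
        using S(2) ij wli wlj by auto
      have im: "i < - int m" using W1[OF st] wui unfolding \<delta>_def by blast
      have jn: "int n + 2 \<le> j" using W2[OF st] wuj unfolding \<delta>_def by blast
      have crp: "weight l \<delta> k = Cr" if "weight u \<delta> k = Cr" for k
      proof -
        have "k \<notin> cap_verts S"
        proof
          assume "k \<in> cap_verts S"
          then obtain a b where ab: "(a, b) \<in> S" "k = a \<or> k = b" unfolding cap_verts_def by force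
          have "weight u \<delta> a = Up" "weight u \<delta> b = Down" using S(2) ab(1) capl[OF ab(1)] by auto
          then show False using ab(2) that by auto
        qed
        then show ?thesis using S(3) that by simp
      qed
      have u0: "fst u 0 + snd u m = n + 1" using st' by auto
      have um: "fst u m + snd u 0 = n + 1" using st' by auto
      have g1: "(\<forall>r. fst u r \<le> fst l r) \<and> fst u 0 < fst l 0 \<and> fst u (Suc m) < fst l (Suc m)"
      proof (rule grow[OF pl1 pu1])
        show "\<forall>r>m. fst u r = 0" using st' by auto
        show "j \<in> range (\<lambda>r. int (fst l r) - int r)" using wlj unfolding w_up Iup_range by blast
        show "int (fst u 0) < j" using u0 jn by linarith
        show "\<forall>r\<le>m. int (fst u r) - int r \<in> range (\<lambda>r. int (fst l r) - int r)"
        proof (intro allI impI)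
          fix r assume r: "r \<le> m"
          have "weight u \<delta> (int (fst u r) - int r) = Cr" using W3[OF st r] unfolding \<delta>_def .
          then have "weight l \<delta> (int (fst u r) - int r) = Cr" by (rule crp)
          then show "int (fst u r) - int r \<in> range (\<lambda>r. int (fst l r) - int r)"
            unfolding w_cr Iup_range by blast
        qed
      qed
      have g2: "(\<forall>r. snd u r \<le> snd l r) \<and> snd u 0 < snd l 0 \<and> snd u (Suc m) < snd l (Suc m)"
      proof (rule grow[OF pl2 pu2, where x = "1 - (int m - int n) - i"])
        show "\<forall>r>m. snd u r = 0" using st' by auto
        have "(of_int i :: 'a) \<in> I_down l (of_int (int m - int n))"
          using wli unfolding w_down \<delta>_def by blast
        then obtain r where r: "i = int r + 1 - (int m - int n) - int (snd l r)"
          unfolding Idown_iff by blast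
        then have "1 - (int m - int n) - i = int (snd l r) - int r" by simp
        then show "1 - (int m - int n) - i \<in> range (\<lambda>r. int (snd l r) - int r)" by blast
        show "int (snd u 0) < 1 - (int m - int n) - i" using um im by linarith
        show "\<forall>r\<le>m. int (snd u r) - int r \<in> range (\<lambda>r. int (snd l r) - int r)"
        proof (intro allI impI)
          fix r assume r: "r \<le> m"
          have mr: "m - r \<le> m" by simp
          have e: "fst u (m - r) + snd u (m - (m - r)) = n + 1" using st' mr by blast
          have e': "fst u (m - r) + snd u r = n + 1" using e r by simp
          have i1: "int (fst u (m - r)) + int (snd u r) = int n + 1" using arg_cong[OF e', of int] by simp
          have i2: "int (m - r) = int m - int r" using r by simp
          have "weight u \<delta> (int (fst u (m - r)) - int (m - r)) = Cr" using W3[OF st mr] unfolding \<delta>_def .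
          then have "weight l \<delta> (int (fst u (m - r)) - int (m - r)) = Cr" by (rule crp)
          then have "(of_int (int (fst u (m - r)) - int (m - r)) :: 'a) \<in> I_down l (of_int (int m - int n))"
            unfolding w_cr \<delta>_def by blast
          then obtain p where p: "int (fst u (m - r)) - int (m - r) = int p + 1 - (int m - int n) - int (snd l p)"
            unfolding Idown_iff by blast
          have "int (snd u r) - int r = int (snd l p) - int p" using p i1 i2 by linarith
          then show "int (snd u r) - int r \<in> range (\<lambda>r. int (snd l r) - int r)" by blast
        qed
      qed
      have "psize (fst u) + 2 \<le> psize (fst l)" using psize_grow[OF pl1] g1 by blast
      moreover have "psize (snd u) + 2 \<le> psize (snd l)" using psize_grow[OF pl2] g2 by blast
      ultimately have "bsize u + 2 < bsize l" unfolding bsize_def by simp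
      then show False using nb by simp
    qed
  qed
  then show "Dcoef l u (of_int (int m - int n) :: 'a) = 0" unfolding Dcoef_def \<delta>_def by simp
qed

end
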